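(* Let $f,g:\mathbb{R}^2\to\mathbb{R}$ be Lipschitz continuous and consider the graphon dynamical system on $I=[0,1]$ with Lebesgue measure and constant graphon $W\equiv1$: \[ \dot u_x=f\Big(u_x,\int_0^1 g(u_x,u_y)\,dy\Big),\qquad u\in L^1(I). \] The following subsets of $L^1(I)$ are dynamically invariant: (i) for every measurable $A\subseteq I$, the cluster subspace $\mathcal C(A)$; (ii) for every measurable $A_1,\ldots,A_n\subseteq I$, the subspace $\bigcap_{k=1}^n\mathcal C(A_k)$; (iii) the set of functions that are injective up to a null set; (iv) for every positive integer $q$, the set of almost everywhere $(1/q)$-periodic functions, i.e. $u$ with $u(x+1/q \bmod 1)=u(x)$ for a.e. $x$; (v) the set of functions satisfying $u_x=u_{1-x}$ for almost every $x$.
   Context: The equation holds, for each $t$, for almost every $x$. $\mathcal C(A)$ is the set of $u\in L^1(I)$ that are constant on $A$ up to a null set. A function is injective up to a null set if its restriction to the complement of some null set is injective. Dynamically invariant means every trajectory starting in the set stays in it for all $t\in\mathbb{R}$. *)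

theory Defs
  imports "HOL-Analysis.Analysis"
begin

abbreviation II :: "real measure" where "II \<equiv> lebesgue_on {0..1}"

definition L1I :: "(real \<Rightarrow> real) set" where
  "L1I = {u. integrable II u}"

definition rhs :: "(real \<Rightarrow> real \<Rightarrow> real) \<Rightarrow> (real \<Rightarrow> real \<Rightarrow> real) \<Rightarrow> (real \<Rightarrow> real) \<Rightarrow> real \<Rightarrow> real" where
  "rhs f g v x = f (v x) (\<integral>y. g (v x) (v y) \<partial>II)"

text \<open>A trajectory: a map u : R -> L^1(I) which is differentiable in L^1(I) at every time t,
  and whose derivative equals the right-hand side almost everywhere in x.\<close>
definition trajectory :: "(real \<Rightarrow> real \<Rightarrow> real) \<Rightarrow> (real \<Rightarrow> real \<Rightarrow> real) \<Rightarrow> (real \<Rightarrow> real \<Rightarrow> real) \<Rightarrow> bool" where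
  "trajectory f g u \<longleftrightarrow>
     (\<forall>t. u t \<in> L1I) \<and>
     (\<forall>t. ((\<lambda>h. \<integral>\<^sup>+ x. ennreal \<bar>(u (t + h) x - u t x) / h - rhs f g (u t) x\<bar> \<partial>II)
            \<longlongrightarrow> 0) (at 0))"

definition dyn_invariant :: "(real \<Rightarrow> real \<Rightarrow> real) \<Rightarrow> (real \<Rightarrow> real \<Rightarrow> real) \<Rightarrow> (real \<Rightarrow> real) set \<Rightarrow> bool" where
  "dyn_invariant f g S \<longleftrightarrow> (\<forall>u. trajectory f g u \<and> u 0 \<in> S \<longrightarrow> (\<forall>t. u t \<in> S))"

definition cluster :: "real set \<Rightarrow> (real \<Rightarrow> real) set" where
  "cluster A = {u \<in> L1I. \<exists>c. AE x in II. x \<in> A \<longrightarrow> u x = c}"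

definition inj_ae_set :: "(real \<Rightarrow> real) set" where
  "inj_ae_set = {u \<in> L1I. \<exists>N \<in> null_sets II. inj_on u ({0..1} - N)}"

definition periodic_set :: "nat \<Rightarrow> (real \<Rightarrow> real) set" where
  "periodic_set q = {u \<in> L1I. AE x in II. u (frac (x + 1 / real q)) = u x}"

definition symm_set :: "(real \<Rightarrow> real) set" where
  "symm_set = {u \<in> L1I. AE x in II. u x = u (1 - x)}"

end

theory Submission
  imports Defs
begin


lemma space_II[simp]: "space II = {0..1}" by simp
lemma finite_II: "finite_measure II" by (rule finite_measure_lebesgue_on) auto
lemma emeasure_II: "emeasure II {0..1} = 1"
  by (simp add: emeasure_restrict_space)
lemma measure_II: "measure II {0..1} = 1"
  by (simp add: measure_restrict_space)

lemma lip2: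
  fixes f :: "real \<Rightarrow> real \<Rightarrow> real"
  assumes "L-lipschitz_on UNIV (\<lambda>(a, b). f a b)"
  shows "\<bar>f a b - f a' b'\<bar> \<le> L * (\<bar>a - a'\<bar> + \<bar>b - b'\<bar>)"
proof -
  have L: "L \<ge> 0" using assms lipschitz_on_nonneg by blast
  have "dist ((\<lambda>(a, b). f a b) (a,b)) ((\<lambda>(a, b). f a b) (a',b')) \<le> L * dist (a,b) (a',b')"
    using lipschitz_onD[OF assms] by blast
  moreover have "dist (a,b) (a',b') \<le> \<bar>a - a'\<bar> + \<bar>b - b'\<bar>"
    unfolding dist_Pair_Pair dist_real_def
    by (metis real_sqrt_abs real_sqrt_le_mono sqrt_sum_squares_le_sum_abs power2_abs)
  ultimately show ?thesis using L
    by (smt (verit, ccfv_SIG) dist_real_def mult_left_mono split_conv)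
qed



lemma int_g:
  fixes g :: "real \<Rightarrow> real \<Rightarrow> real"
  assumes lg: "Lg-lipschitz_on UNIV (\<lambda>(a, b). g a b)" and v: "integrable II v"
  shows "integrable II (\<lambda>y. g a (v y))"
proof -
  have Lg: "Lg \<ge> 0" using lg lipschitz_on_nonneg by blast
  have cont: "continuous_on UNIV (\<lambda>b. g a b)"
  proof -
    have "continuous_on UNIV (\<lambda>(a, b). g a b)" using lg lipschitz_on_continuous_on by blast
    then have "continuous_on UNIV ((\<lambda>(a, b). g a b) \<circ> (\<lambda>b. (a,b)))"
      by (intro continuous_on_compose continuous_intros) (auto elim: continuous_on_subset)
    then show ?thesis by (simp add: o_def)
  qed
  have m: "(\<lambda>y. g a (v y)) \<in> borel_measurable II"
    using borel_measurable_continuous_onI[OF cont] v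
    by (metis borel_measurable_integrable measurable_compose)
  show ?thesis
  proof (rule Bochner_Integration.integrable_bound[where f="\<lambda>y. \<bar>g a 0\<bar> + Lg * \<bar>v y\<bar>"])
    interpret finite_measure II by (rule finite_II)
    show "integrable II (\<lambda>y. \<bar>g a 0\<bar> + Lg * \<bar>v y\<bar>)" using v by auto
    show "(\<lambda>y. g a (v y)) \<in> borel_measurable II" by (rule m)
    show "AE x in II. norm (g a (v x)) \<le> norm (\<bar>g a 0\<bar> + Lg * \<bar>v x\<bar>)"
    proof (rule AE_I2)
      fix x
      have "\<bar>g a (v x) - g a 0\<bar> \<le> Lg * (\<bar>a - a\<bar> + \<bar>v x - 0\<bar>)" by (rule lip2[OF lg])
      then show "norm (g a (v x)) \<le> norm (\<bar>g a 0\<bar> + Lg * \<bar>v x\<bar>)" using Lg by auto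
    qed
  qed
qed

lemma G_lip:
  fixes g :: "real \<Rightarrow> real \<Rightarrow> real"
  assumes lg: "Lg-lipschitz_on UNIV (\<lambda>(a, b). g a b)" and v: "integrable II v"
  shows "\<bar>(\<integral>y. g a (v y) \<partial>II) - (\<integral>y. g b (v y) \<partial>II)\<bar> \<le> Lg * \<bar>a - b\<bar>"
proof -
  interpret finite_measure II by (rule finite_II)
  have i1: "integrable II (\<lambda>y. g a (v y))" and i2: "integrable II (\<lambda>y. g b (v y))"
    using int_g[OF lg v] by auto
  have "\<bar>(\<integral>y. g a (v y) \<partial>II) - (\<integral>y. g b (v y) \<partial>II)\<bar> = \<bar>\<integral>y. g a (v y) - g b (v y) \<partial>II\<bar>"
    using i1 i2 by simp
  also have "\<dots> \<le> (\<integral>y. \<bar>g a (v y) - g b (v y)\<bar> \<partial>II)"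
    by (rule integral_abs_bound)
  also have "\<dots> \<le> (\<integral>y. Lg * \<bar>a - b\<bar> \<partial>II)"
  proof (rule integral_mono)
    show "integrable II (\<lambda>y. \<bar>g a (v y) - g b (v y)\<bar>)" using i1 i2 by auto
    show "integrable II (\<lambda>y. Lg * \<bar>a - b\<bar>)" by auto
    fix y show "\<bar>g a (v y) - g b (v y)\<bar> \<le> Lg * \<bar>a - b\<bar>"
      using lip2[OF lg, of a "v y" b "v y"] by simp
  qed
  also have "\<dots> = Lg * \<bar>a - b\<bar>" using measure_II by simp
  finally show ?thesis .
qed

lemma rhs_lip:
  fixes f g :: "real \<Rightarrow> real \<Rightarrow> real"
  assumes lf: "Lf-lipschitz_on UNIV (\<lambda>(a, b). f a b)"
    and lg: "Lg-lipschitz_on UNIV (\<lambda>(a, b). g a b)" and v: "integrable II v"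
  shows "\<bar>rhs f g v x - rhs f g v y\<bar> \<le> Lf * (1 + Lg) * \<bar>v x - v y\<bar>"
proof -
  have Lf: "Lf \<ge> 0" using lf lipschitz_on_nonneg by blast
  have "\<bar>rhs f g v x - rhs f g v y\<bar> \<le> Lf * (\<bar>v x - v y\<bar> + \<bar>(\<integral>z. g (v x) (v z) \<partial>II) - (\<integral>z. g (v y) (v z) \<partial>II)\<bar>)"
    unfolding rhs_def by (rule lip2[OF lf])
  also have "\<dots> \<le> Lf * (\<bar>v x - v y\<bar> + Lg * \<bar>v x - v y\<bar>)"
    using G_lip[OF lg v] Lf by (intro mult_left_mono) auto
  finally show ?thesis by (simp add: algebra_simps)
qed

lemma rhs_meas:
  fixes f g :: "real \<Rightarrow> real \<Rightarrow> real"
  assumes lf: "Lf-lipschitz_on UNIV (\<lambda>(a, b). f a b)"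
    and lg: "Lg-lipschitz_on UNIV (\<lambda>(a, b). g a b)" and v: "integrable II v"
  shows "rhs f g v \<in> borel_measurable II"
proof -
  define H where "H a = f a (\<integral>z. g a (v z) \<partial>II)" for a
  have Lf: "Lf \<ge> 0" using lf lipschitz_on_nonneg by blast
  have Lg: "Lg \<ge> 0" using lg lipschitz_on_nonneg by blast
  have "(Lf * (1 + Lg))-lipschitz_on UNIV H"
  proof (rule lipschitz_onI)
    fix a b :: real
    have "\<bar>H a - H b\<bar> \<le> Lf * (\<bar>a - b\<bar> + \<bar>(\<integral>z. g a (v z) \<partial>II) - (\<integral>z. g b (v z) \<partial>II)\<bar>)"
      unfolding H_def by (rule lip2[OF lf])
    also have "\<dots> \<le> Lf * (\<bar>a - b\<bar> + Lg * \<bar>a - b\<bar>)"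
      using G_lip[OF lg v] Lf by (intro mult_left_mono) auto
    finally show "dist (H a) (H b) \<le> Lf * (1 + Lg) * dist a b"
      by (simp add: dist_real_def algebra_simps)
  qed (use Lf Lg in auto)
  then have "continuous_on UNIV H" using lipschitz_on_continuous_on by blast
  then have "H \<in> borel_measurable borel" by (rule borel_measurable_continuous_onI)
  moreover have "rhs f g v = H \<circ> v" by (auto simp: rhs_def H_def)
  ultimately show ?thesis using v
    by (metis borel_measurable_integrable measurable_comp)
qed



lemma loc_cont:
  fixes D :: "real \<Rightarrow> real"
  assumes loc: "\<And>t e. e > 0 \<Longrightarrow> \<exists>\<delta>>0. \<forall>h. h \<noteq> 0 \<and> \<bar>h\<bar> < \<delta> \<longrightarrow> \<bar>D (t+h) - D t\<bar> \<le> \<bar>h\<bar> * (C * D t + e)"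
  shows "isCont D t"
proof -
  obtain \<delta> where d: "\<delta> > 0" "\<forall>h. h \<noteq> 0 \<and> \<bar>h\<bar> < \<delta> \<longrightarrow> \<bar>D (t+h) - D t\<bar> \<le> \<bar>h\<bar> * (C * D t + 1)"
    using loc[of 1] by auto
  define B where "B = \<bar>C * D t + 1\<bar>"
  have "((\<lambda>h. D (t + h)) \<longlongrightarrow> D t) (at 0)"
  proof (rule tendstoI)
    fix e :: real assume e: "e > 0"
    have pos: "0 < min \<delta> (e / (B + 1))" using d e by (auto simp: B_def)
    have key: "dist (D (t + h)) (D t) < e" if h: "h \<noteq> 0 \<and> dist h 0 < min \<delta> (e / (B + 1))" for h
    proof -
      have "\<bar>D (t+h) - D t\<bar> \<le> \<bar>h\<bar> * (C * D t + 1)" using h d by auto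
      also have "\<dots> \<le> \<bar>h\<bar> * B" unfolding B_def by (intro mult_left_mono) auto
      also have "\<dots> \<le> \<bar>h\<bar> * (B + 1)" by (intro mult_left_mono) auto
      also have "\<dots> < e"
      proof -
        have "\<bar>h\<bar> < e / (B + 1)" using h by auto
        then show ?thesis unfolding B_def by (simp add: field_simps)
      qed
      finally show "dist (D (t + h)) (D t) < e" by (simp add: dist_real_def)
    qed
    show "\<forall>\<^sub>F h in at 0. dist (D (t + h)) (D t) < e"
      unfolding eventually_at using pos key by blast
  qed
  then show ?thesis by (simp add: isCont_iff)
qed

lemma gronwall_fwd:
  fixes D :: "real \<Rightarrow> real"
  assumes nonneg: "\<And>t. D t \<ge> 0" and C: "C \<ge> 0"
  and loc: "\<And>t e. e > 0 \<Longrightarrow> \<exists>\<delta>>0. \<forall>h. h \<noteq> 0 \<and> \<bar>h\<bar> < \<delta> \<longrightarrow> \<bar>D (t+h) - D t\<bar> \<le> \<bar>h\<bar> * (C * D t + e)"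
  and st: "t \<le> s" and e: "e > 0"
  shows "D s \<le> (D t + e) * exp ((C+1) * (s - t))"
proof (rule ccontr)
  assume ns: "\<not> ?thesis"
  define K where "K = C + 1"
  define \<psi> where "\<psi> r = (D t + e) * exp (K * (r - t))" for r
  define A where "A = {r\<in>{t..s}. D r > \<psi> r}"
  have sA: "s \<in> A" using ns st by (auto simp: A_def \<psi>_def K_def)
  define s0 where "s0 = Inf A"
  have bdd: "bdd_below A" unfolding A_def by (auto intro: bdd_belowI[of _ t])
  have ts0: "t \<le> s0" unfolding s0_def using sA by (intro cInf_greatest) (auto simp: A_def)
  have s0s: "s0 \<le> s" unfolding s0_def using sA bdd by (intro cInf_lower)
  have below: "D r \<le> \<psi> r" if "t \<le> r" "r < s0" for r
  proof (rule ccontr)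
    assume "\<not> D r \<le> \<psi> r"
    then have "r \<in> A" using that s0s by (auto simp: A_def)
    then have "s0 \<le> r" unfolding s0_def using bdd by (intro cInf_lower)
    then show False using that by auto
  qed
  have psi_ge: "\<psi> r \<ge> D t + e" if "t \<le> r" for r
  proof -
    have "exp (K * (r - t)) \<ge> 1" using that C by (auto simp: K_def)
    then have "(D t + e) * 1 \<le> (D t + e) * exp (K * (r - t))"
      using nonneg[of t] e by (intro mult_left_mono) auto
    then show ?thesis unfolding \<psi>_def by simp
  qed
  have contpsi: "isCont \<psi> r" for r unfolding \<psi>_def by (intro continuous_intros)
  have D0: "D s0 \<le> \<psi> s0"
  proof (cases "s0 = t")
    case True then show ?thesis using psi_ge[of t] e by auto
  next
    case False
    then have lt: "t < s0" using ts0 by auto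
    have "((\<lambda>r. D r) \<longlongrightarrow> D s0) (at_left s0)"
      using loc_cont[OF loc, of s0] by (simp add: isCont_def filterlim_at_split)
    moreover have "((\<lambda>r. \<psi> r) \<longlongrightarrow> \<psi> s0) (at_left s0)"
      using contpsi[of s0] by (simp add: isCont_def filterlim_at_split)
    moreover have "eventually (\<lambda>r. D r \<le> \<psi> r) (at_left s0)"
      using eventually_at_left_real[OF lt] below by (rule eventually_mono) auto
    ultimately show ?thesis
      by (intro tendsto_le[OF trivial_limit_at_left_real]) auto
  qed
  obtain \<delta> where d: "\<delta> > 0" "\<forall>h. h \<noteq> 0 \<and> \<bar>h\<bar> < \<delta> \<longrightarrow> \<bar>D (s0+h) - D s0\<bar> \<le> \<bar>h\<bar> * (C * D s0 + e/2)"
    using loc[of "e/2" s0] e by auto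
  have notA: "r \<notin> A" if "s0 \<le> r" "r < s0 + \<delta>" for r
  proof (cases "r = s0")
    case True then show ?thesis using D0 by (auto simp: A_def)
  next
    case False
    define h where "h = r - s0"
    have h: "h > 0" "h < \<delta>" using that False by (auto simp: h_def)
    have "D r \<le> D s0 + h * (C * D s0 + e/2)"
      using d(2)[rule_format, of h] h by (auto simp: h_def)
    also have "\<dots> \<le> \<psi> s0 + h * (C * \<psi> s0 + e/2)"
      using D0 h C by (intro add_mono mult_left_mono) auto
    also have "\<dots> \<le> \<psi> s0 * (1 + K * h)"
    proof -
      have "e/2 \<le> \<psi> s0" using psi_ge[OF ts0] nonneg[of t] e by auto
      then show ?thesis using h by (simp add: K_def algebra_simps)
    qed
    also have "\<dots> \<le> \<psi> s0 * exp (K * h)"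
      using psi_ge[OF ts0] nonneg[of t] e
      by (intro mult_left_mono) (auto simp: exp_ge_add_one_self)
    also have "\<dots> = \<psi> r"
    proof -
      have "exp (K * (s0 - t)) * exp (K * (r - s0)) = exp (K * (r - t))"
        by (simp add: exp_add[symmetric] algebra_simps)
      then show ?thesis unfolding \<psi>_def h_def by (simp add: mult.assoc)
    qed
    finally show ?thesis by (auto simp: A_def)
  qed
  have "s0 + \<delta> \<le> x" if "x \<in> A" for x
  proof -
    have "s0 \<le> x" unfolding s0_def using that bdd by (intro cInf_lower)
    then show ?thesis using notA[of x] that by force
  qed
  then have "s0 + \<delta> \<le> Inf A" using sA by (intro cInf_greatest) auto
  then have "s0 + \<delta> \<le> s0" unfolding s0_def by simp
  then show False using d by auto
qed

lemma gronwall_fwd2: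
  fixes D :: "real \<Rightarrow> real"
  assumes nonneg: "\<And>t. D t \<ge> 0" and C: "C \<ge> 0"
  and loc: "\<And>t e. e > 0 \<Longrightarrow> \<exists>\<delta>>0. \<forall>h. h \<noteq> 0 \<and> \<bar>h\<bar> < \<delta> \<longrightarrow> \<bar>D (t+h) - D t\<bar> \<le> \<bar>h\<bar> * (C * D t + e)"
  and st: "t \<le> s"
  shows "D s \<le> D t * exp ((C+1) * (s - t))"
proof (rule field_le_epsilon)
  fix e :: real assume e: "e > 0"
  define E where "E = exp ((C+1) * (s - t))"
  have E: "E > 0" by (simp add: E_def)
  have "D s \<le> (D t + e / E) * E"
    using gronwall_fwd[OF nonneg C loc st, of "e/E"] e E by (simp add: E_def)
  also have "\<dots> = D t * E + e" using E by (simp add: field_simps)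
  finally show "D s \<le> D t * exp ((C+1) * (s - t)) + e" by (simp add: E_def)
qed

lemma gronwall:
  fixes D :: "real \<Rightarrow> real"
  assumes nonneg: "\<And>t. D t \<ge> 0" and C: "C \<ge> 0"
  and loc: "\<And>t e. e > 0 \<Longrightarrow> \<exists>\<delta>>0. \<forall>h. h \<noteq> 0 \<and> \<bar>h\<bar> < \<delta> \<longrightarrow> \<bar>D (t+h) - D t\<bar> \<le> \<bar>h\<bar> * (C * D t + e)"
  shows "D s \<le> D t * exp ((C+1) * \<bar>s - t\<bar>)"
proof (cases "t \<le> s")
  case True then show ?thesis using gronwall_fwd2[OF nonneg C loc True] by simp
next
  case False
  define D' where "D' x = D (- x)" for x
  have loc': "\<exists>\<delta>>0. \<forall>h. h \<noteq> 0 \<and> \<bar>h\<bar> < \<delta> \<longrightarrow> \<bar>D' (t+h) - D' t\<bar> \<le> \<bar>h\<bar> * (C * D' t + e)"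
    if e0: "e > 0" for t e
  proof -
    obtain \<delta> where d: "\<delta> > 0" "\<forall>h. h \<noteq> 0 \<and> \<bar>h\<bar> < \<delta> \<longrightarrow> \<bar>D (-t+h) - D (-t)\<bar> \<le> \<bar>h\<bar> * (C * D (-t) + e)"
      using loc[OF e0, of "-t"] by auto
    show ?thesis
    proof (intro exI[of _ \<delta>] conjI allI impI)
      fix h :: real assume h: "h \<noteq> 0 \<and> \<bar>h\<bar> < \<delta>"
      then show "\<bar>D' (t+h) - D' t\<bar> \<le> \<bar>h\<bar> * (C * D' t + e)"
        using d(2)[rule_format, of "-h"] by (simp add: D'_def)
    qed (use d in auto)
  qed
  have "D' (-s) \<le> D' (-t) * exp ((C+1) * (-s - -t))"
    using False by (intro gronwall_fwd2[OF _ C loc']) (auto simp: D'_def nonneg)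
  then show ?thesis using False by (simp add: D'_def)
qed



lemma traj_int: "trajectory f g u \<Longrightarrow> integrable II (u t)"
  by (simp add: trajectory_def L1I_def)

lemma traj_lim: "trajectory f g u \<Longrightarrow>
  ((\<lambda>h. \<integral>\<^sup>+ x. ennreal \<bar>(u (t + h) x - u t x) / h - rhs f g (u t) x\<bar> \<partial>II) \<longlongrightarrow> 0) (at 0)"
  by (simp add: trajectory_def)

lemma pt_bound:
  fixes A B A' B' h qa qb Fa Fb C :: real
  assumes "A' = A + h * (qa + Fa)" "B' = B + h * (qb + Fb)" "\<bar>Fa - Fb\<bar> \<le> C * \<bar>A - B\<bar>"
  shows "\<bar>A' - B'\<bar> \<le> (1 + \<bar>h\<bar> * C) * \<bar>A - B\<bar> + \<bar>h\<bar> * \<bar>qa\<bar> + \<bar>h\<bar> * \<bar>qb\<bar>"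
    and "\<bar>A - B\<bar> \<le> 1 * \<bar>A' - B'\<bar> + (\<bar>h\<bar> * C) * \<bar>A - B\<bar> + \<bar>h\<bar> * \<bar>qa\<bar> + \<bar>h\<bar> * \<bar>qb\<bar>"
proof -
  have e: "A' - B' = (A - B) + h * (qa - qb) + h * (Fa - Fb)" using assms(1,2) by (simp add: algebra_simps)
  have "\<bar>h * (Fa - Fb)\<bar> \<le> \<bar>h\<bar> * (C * \<bar>A - B\<bar>)"
    using assms(3) by (simp add: abs_mult mult_left_mono)
  moreover have "\<bar>h * (qa - qb)\<bar> \<le> \<bar>h\<bar> * \<bar>qa\<bar> + \<bar>h\<bar> * \<bar>qb\<bar>"
    by (simp add: abs_mult distrib_left[symmetric] mult_left_mono abs_triangle_ineq4)
  moreover have t1: "(1 + \<bar>h\<bar> * C) * \<bar>A - B\<bar> = \<bar>A - B\<bar> + \<bar>h\<bar> * (C * \<bar>A - B\<bar>)"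
    "(\<bar>h\<bar> * C) * \<bar>A - B\<bar> = \<bar>h\<bar> * (C * \<bar>A - B\<bar>)" by (simp_all add: algebra_simps)
  moreover have "\<bar>(A - B) + h * (qa - qb) + h * (Fa - Fb)\<bar> \<le> \<bar>A - B\<bar> + \<bar>h * (qa - qb)\<bar> + \<bar>h * (Fa - Fb)\<bar>"
    by (meson abs_triangle_ineq add_mono order_trans order_refl)
  moreover have "\<bar>A - B\<bar> \<le> \<bar>(A - B) + h * (qa - qb) + h * (Fa - Fb)\<bar> + \<bar>h * (qa - qb)\<bar> + \<bar>h * (Fa - Fb)\<bar>"
    by linarith
  ultimately show "\<bar>A' - B'\<bar> \<le> (1 + \<bar>h\<bar> * C) * \<bar>A - B\<bar> + \<bar>h\<bar> * \<bar>qa\<bar> + \<bar>h\<bar> * \<bar>qb\<bar>"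
    and "\<bar>A - B\<bar> \<le> 1 * \<bar>A' - B'\<bar> + (\<bar>h\<bar> * C) * \<bar>A - B\<bar> + \<bar>h\<bar> * \<bar>qa\<bar> + \<bar>h\<bar> * \<bar>qb\<bar>"
    unfolding e by linarith+
qed

lemma nn4:
  fixes X Y qa qb :: "'m \<Rightarrow> real"
  assumes [measurable]: "X \<in> borel_measurable M" "Y \<in> borel_measurable M"
    "qa \<in> borel_measurable M" "qb \<in> borel_measurable M"
    and pos: "\<alpha> \<ge> 0" "\<beta> \<ge> 0"
  shows "(\<integral>\<^sup>+\<omega>. ennreal (\<alpha> * \<bar>X \<omega>\<bar> + \<beta> * \<bar>Y \<omega>\<bar> + \<bar>h\<bar> * \<bar>qa \<omega>\<bar> + \<bar>h\<bar> * \<bar>qb \<omega>\<bar>) \<partial>M)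
    = ennreal \<alpha> * (\<integral>\<^sup>+\<omega>. ennreal \<bar>X \<omega>\<bar> \<partial>M) + ennreal \<beta> * (\<integral>\<^sup>+\<omega>. ennreal \<bar>Y \<omega>\<bar> \<partial>M)
      + ennreal \<bar>h\<bar> * (\<integral>\<^sup>+\<omega>. ennreal \<bar>qa \<omega>\<bar> \<partial>M) + ennreal \<bar>h\<bar> * (\<integral>\<^sup>+\<omega>. ennreal \<bar>qb \<omega>\<bar> \<partial>M)"
proof -
  have "(\<integral>\<^sup>+\<omega>. ennreal (\<alpha> * \<bar>X \<omega>\<bar> + \<beta> * \<bar>Y \<omega>\<bar> + \<bar>h\<bar> * \<bar>qa \<omega>\<bar> + \<bar>h\<bar> * \<bar>qb \<omega>\<bar>) \<partial>M)
    = (\<integral>\<^sup>+\<omega>. ennreal \<alpha> * ennreal \<bar>X \<omega>\<bar> + ennreal \<beta> * ennreal \<bar>Y \<omega>\<bar> + ennreal \<bar>h\<bar> * ennreal \<bar>qa \<omega>\<bar> + ennreal \<bar>h\<bar> * ennreal \<bar>qb \<omega>\<bar> \<partial>M)"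
    using pos by (intro nn_integral_cong) (simp add: ennreal_plus ennreal_mult)
  also have "\<dots> = ennreal \<alpha> * (\<integral>\<^sup>+\<omega>. ennreal \<bar>X \<omega>\<bar> \<partial>M) + ennreal \<beta> * (\<integral>\<^sup>+\<omega>. ennreal \<bar>Y \<omega>\<bar> \<partial>M)
      + ennreal \<bar>h\<bar> * (\<integral>\<^sup>+\<omega>. ennreal \<bar>qa \<omega>\<bar> \<partial>M) + ennreal \<bar>h\<bar> * (\<integral>\<^sup>+\<omega>. ennreal \<bar>qb \<omega>\<bar> \<partial>M)"
    by (simp add: nn_integral_add nn_integral_cmult)
  finally show ?thesis .
qed




lemma ennreal4:
  fixes a b k x y z w :: real
  assumes "a \<ge> 0" "b \<ge> 0" "k \<ge> 0" "x \<ge> 0" "y \<ge> 0" "z \<ge> 0" "w \<ge> 0"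
  shows "ennreal a * ennreal x + ennreal b * ennreal y + ennreal k * ennreal z + ennreal k * ennreal w
    = ennreal (a * x + b * y + k * z + k * w)"
  using assms by (simp add: ennreal_plus ennreal_mult)

lemma defect:
  fixes f g :: "real \<Rightarrow> real \<Rightarrow> real" and u :: "real \<Rightarrow> real \<Rightarrow> real" and M :: "'m measure"
    and p1 p2 :: "'m \<Rightarrow> real"
  assumes lf: "Lf-lipschitz_on UNIV (\<lambda>(a, b). f a b)"
    and lg: "Lg-lipschitz_on UNIV (\<lambda>(a, b). g a b)"
    and tr: "trajectory f g u"
    and p1: "p1 \<in> M \<rightarrow>\<^sub>M II" and p2: "p2 \<in> M \<rightarrow>\<^sub>M II" and c: "c \<ge> 0"
    and push1: "\<And>\<phi>. \<phi> \<in> borel_measurable II \<Longrightarrow>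
        (\<integral>\<^sup>+\<omega>. ennreal \<bar>\<phi> (p1 \<omega>)\<bar> \<partial>M) \<le> ennreal c * (\<integral>\<^sup>+x. ennreal \<bar>\<phi> x\<bar> \<partial>II)"
    and push2: "\<And>\<phi>. \<phi> \<in> borel_measurable II \<Longrightarrow>
        (\<integral>\<^sup>+\<omega>. ennreal \<bar>\<phi> (p2 \<omega>)\<bar> \<partial>M) \<le> ennreal c * (\<integral>\<^sup>+x. ennreal \<bar>\<phi> x\<bar> \<partial>II)"
  shows "(\<integral>\<^sup>+\<omega>. ennreal \<bar>u s (p1 \<omega>) - u s (p2 \<omega>)\<bar> \<partial>M)
     \<le> ennreal (exp ((Lf * (1 + Lg) + 1) * \<bar>s - t\<bar>)) * (\<integral>\<^sup>+\<omega>. ennreal \<bar>u t (p1 \<omega>) - u t (p2 \<omega>)\<bar> \<partial>M)"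
proof -
  define C where "C = Lf * (1 + Lg)"
  have Lf: "Lf \<ge> 0" using lf lipschitz_on_nonneg by blast
  have Lg: "Lg \<ge> 0" using lg lipschitz_on_nonneg by blast
  have C: "C \<ge> 0" using Lf Lg by (simp add: C_def)
  define Dn where "Dn t = (\<integral>\<^sup>+\<omega>. ennreal \<bar>u t (p1 \<omega>) - u t (p2 \<omega>)\<bar> \<partial>M)" for t
  have int: "integrable II (u t)" for t using traj_int[OF tr] .
  have umeas[measurable]: "u t \<in> borel_measurable II" for t using int by auto
  have m1[measurable]: "(\<lambda>\<omega>. \<phi> (p1 \<omega>)) \<in> borel_measurable M" if "\<phi> \<in> borel_measurable II" for \<phi> :: "real \<Rightarrow> real"
    using measurable_compose[OF p1 that] .
  have m2[measurable]: "(\<lambda>\<omega>. \<phi> (p2 \<omega>)) \<in> borel_measurable M" if "\<phi> \<in> borel_measurable II" for \<phi> :: "real \<Rightarrow> real"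
    using measurable_compose[OF p2 that] .
  have fin: "Dn t < \<infinity>" for t
  proof -
    have "Dn t \<le> (\<integral>\<^sup>+\<omega>. ennreal \<bar>u t (p1 \<omega>)\<bar> + ennreal \<bar>u t (p2 \<omega>)\<bar> \<partial>M)"
      unfolding Dn_def by (intro nn_integral_mono) (simp add: ennreal_plus[symmetric] del: ennreal_plus)
    also have "\<dots> = (\<integral>\<^sup>+\<omega>. ennreal \<bar>u t (p1 \<omega>)\<bar> \<partial>M) + (\<integral>\<^sup>+\<omega>. ennreal \<bar>u t (p2 \<omega>)\<bar> \<partial>M)"
      by (intro nn_integral_add) (auto intro: m1 m2)
    also have "\<dots> \<le> ennreal c * (\<integral>\<^sup>+x. ennreal \<bar>u t x\<bar> \<partial>II) + ennreal c * (\<integral>\<^sup>+x. ennreal \<bar>u t x\<bar> \<partial>II)"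
      by (intro add_mono push1 push2 umeas)
    also have "\<dots> < \<infinity>"
    proof -
      have "(\<integral>\<^sup>+x. ennreal \<bar>u t x\<bar> \<partial>II) < \<infinity>" using int[of t] by (simp add: integrable_iff_bounded)
      then show ?thesis by (simp add: ennreal_mult_less_top)
    qed
    finally show ?thesis .
  qed
  define D where "D t = enn2real (Dn t)" for t
  have DnD: "Dn t = ennreal (D t)" for t using fin[of t] by (simp add: D_def)
  have Dpos: "D t \<ge> 0" for t by (simp add: D_def)
  have loc: "\<exists>\<delta>>0. \<forall>h. h \<noteq> 0 \<and> \<bar>h\<bar> < \<delta> \<longrightarrow> \<bar>D (t+h) - D t\<bar> \<le> \<bar>h\<bar> * (C * D t + e)"
    if e: "e > 0" for t e
  proof -
    define F where "F = rhs f g (u t)"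
    have Fm[measurable]: "F \<in> borel_measurable II" unfolding F_def by (rule rhs_meas[OF lf lg int])
    have Flip: "\<bar>F x - F y\<bar> \<le> C * \<bar>u t x - u t y\<bar>" for x y
      unfolding F_def C_def by (rule rhs_lip[OF lf lg int])
    define q where "q h x = (u (t + h) x - u t x) / h - F x" for h x
    have qm[measurable]: "q h \<in> borel_measurable II" for h unfolding q_def by measurable
    define \<epsilon> where "\<epsilon> h = (\<integral>\<^sup>+x. ennreal \<bar>q h x\<bar> \<partial>II)" for h
    have "(\<epsilon> \<longlongrightarrow> 0) (at 0)" unfolding \<epsilon>_def q_def F_def using traj_lim[OF tr, of t] by simp
    then have "eventually (\<lambda>h. \<epsilon> h < ennreal (e / (2 * c + 1))) (at 0)"
      using e c by (intro order_tendstoD(2)) auto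
    then obtain \<delta> where d: "\<delta> > 0" "\<And>h. h \<noteq> 0 \<Longrightarrow> dist h 0 < \<delta> \<Longrightarrow> \<epsilon> h < ennreal (e / (2 * c + 1))"
      unfolding eventually_at by auto
    show ?thesis
    proof (intro exI[of _ \<delta>] conjI allI impI)
      show "\<delta> > 0" by (rule d)
      fix h :: real assume h: "h \<noteq> 0 \<and> \<bar>h\<bar> < \<delta>"
      then have eh: "\<epsilon> h < ennreal (e / (2 * c + 1))" using d by auto
      define er where "er = enn2real (\<epsilon> h)"
      have "\<epsilon> h < top" using eh ennreal_less_top less_trans by blast
      then have eer: "\<epsilon> h = ennreal er" unfolding er_def by (simp add: less_top)
      have er0: "er \<ge> 0" by (simp add: er_def)
      have er1: "er < e / (2 * c + 1)" using eh unfolding eer using ennreal_less_iff[OF er0] by simp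
      have cer: "2 * c * er \<le> e"
      proof -
        have "2 * c * er \<le> (2 * c + 1) * er" using er0 by (simp add: mult_right_mono)
        also have "\<dots> \<le> e" using er1 c by (simp add: field_simps)
        finally show ?thesis .
      qed
      have Q1: "(\<integral>\<^sup>+\<omega>. ennreal \<bar>q h (p1 \<omega>)\<bar> \<partial>M) \<le> ennreal (c * er)"
        using push1[OF qm[of h]] eer c er0 unfolding \<epsilon>_def by (simp add: ennreal_mult)
      have Q2: "(\<integral>\<^sup>+\<omega>. ennreal \<bar>q h (p2 \<omega>)\<bar> \<partial>M) \<le> ennreal (c * er)"
        using push2[OF qm[of h]] eer c er0 unfolding \<epsilon>_def by (simp add: ennreal_mult)
      have ueq: "u (t + h) x = u t x + h * (q h x + F x)" for x
        using h by (simp add: q_def field_simps)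
      note pb = pt_bound[OF ueq ueq Flip]
      have "Dn (t + h) \<le> (\<integral>\<^sup>+\<omega>. ennreal ((1 + \<bar>h\<bar> * C) * \<bar>u t (p1 \<omega>) - u t (p2 \<omega>)\<bar> + 0 * \<bar>u t (p1 \<omega>) - u t (p2 \<omega>)\<bar>
           + \<bar>h\<bar> * \<bar>q h (p1 \<omega>)\<bar> + \<bar>h\<bar> * \<bar>q h (p2 \<omega>)\<bar>) \<partial>M)"
        unfolding Dn_def using pb(1) by (intro nn_integral_mono ennreal_leI) simp
      also have "\<dots> = ennreal (1 + \<bar>h\<bar> * C) * Dn t + ennreal 0 * Dn t
          + ennreal \<bar>h\<bar> * (\<integral>\<^sup>+\<omega>. ennreal \<bar>q h (p1 \<omega>)\<bar> \<partial>M) + ennreal \<bar>h\<bar> * (\<integral>\<^sup>+\<omega>. ennreal \<bar>q h (p2 \<omega>)\<bar> \<partial>M)"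
        unfolding Dn_def using C by (intro nn4) auto
      also have "\<dots> \<le> ennreal (1 + \<bar>h\<bar> * C) * ennreal (D t) + ennreal 0 * ennreal (D t)
          + ennreal \<bar>h\<bar> * ennreal (c * er) + ennreal \<bar>h\<bar> * ennreal (c * er)"
        unfolding DnD by (intro add_mono mult_left_mono Q1 Q2 order_refl) auto
      also have "\<dots> = ennreal ((1 + \<bar>h\<bar> * C) * D t + 0 * D t + \<bar>h\<bar> * (c * er) + \<bar>h\<bar> * (c * er))"
        using C c er0 Dpos[of t] by (intro ennreal4) auto
      finally have up: "D (t + h) \<le> (1 + \<bar>h\<bar> * C) * D t + 0 * D t + \<bar>h\<bar> * (c * er) + \<bar>h\<bar> * (c * er)"
        unfolding DnD using C c er0 Dpos[of t] by (subst (asm) ennreal_le_iff) auto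
      have "Dn t \<le> (\<integral>\<^sup>+\<omega>. ennreal (1 * \<bar>u (t+h) (p1 \<omega>) - u (t+h) (p2 \<omega>)\<bar> + (\<bar>h\<bar> * C) * \<bar>u t (p1 \<omega>) - u t (p2 \<omega>)\<bar>
           + \<bar>h\<bar> * \<bar>q h (p1 \<omega>)\<bar> + \<bar>h\<bar> * \<bar>q h (p2 \<omega>)\<bar>) \<partial>M)"
        unfolding Dn_def using pb(2) by (intro nn_integral_mono ennreal_leI) simp
      also have "\<dots> = ennreal 1 * Dn (t + h) + ennreal (\<bar>h\<bar> * C) * Dn t
          + ennreal \<bar>h\<bar> * (\<integral>\<^sup>+\<omega>. ennreal \<bar>q h (p1 \<omega>)\<bar> \<partial>M) + ennreal \<bar>h\<bar> * (\<integral>\<^sup>+\<omega>. ennreal \<bar>q h (p2 \<omega>)\<bar> \<partial>M)"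
        unfolding Dn_def using C by (intro nn4) auto
      also have "\<dots> \<le> ennreal 1 * ennreal (D (t + h)) + ennreal (\<bar>h\<bar> * C) * ennreal (D t)
          + ennreal \<bar>h\<bar> * ennreal (c * er) + ennreal \<bar>h\<bar> * ennreal (c * er)"
        unfolding DnD by (intro add_mono mult_left_mono Q1 Q2 order_refl) auto
      also have "\<dots> = ennreal (1 * D (t + h) + (\<bar>h\<bar> * C) * D t + \<bar>h\<bar> * (c * er) + \<bar>h\<bar> * (c * er))"
        using C c er0 Dpos[of t] Dpos[of "t+h"] by (intro ennreal4) auto
      finally have lo: "D t \<le> 1 * D (t + h) + (\<bar>h\<bar> * C) * D t + \<bar>h\<bar> * (c * er) + \<bar>h\<bar> * (c * er)"
        unfolding DnD using C c er0 Dpos[of t] Dpos[of "t+h"] by (subst (asm) ennreal_le_iff) auto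
      have "\<bar>h\<bar> * (c * er) + \<bar>h\<bar> * (c * er) \<le> \<bar>h\<bar> * e"
        using cer by (simp add: distrib_left[symmetric] mult_left_mono)
      then show "\<bar>D (t + h) - D t\<bar> \<le> \<bar>h\<bar> * (C * D t + e)"
        using up lo by (simp add: algebra_simps)
    qed
  qed
  have "D s \<le> D t * exp ((C + 1) * \<bar>s - t\<bar>)"
    by (rule gronwall[OF Dpos C loc])
  then have "ennreal (D s) \<le> ennreal (exp ((C + 1) * \<bar>s - t\<bar>)) * ennreal (D t)"
    using Dpos[of t] by (simp add: ennreal_mult[symmetric] mult.commute)
  then show ?thesis unfolding DnD[symmetric] Dn_def C_def .
qed



lemma affine_meas: "c \<noteq> 0 \<Longrightarrow> (\<lambda>x::real. t + c * x) \<in> lebesgue \<rightarrow>\<^sub>M lebesgue"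
  using lebesgue_affine_measurable[where c="\<lambda>x::real. c" and t=t] by force

lemma sets_II_leb: "{0..1::real} \<inter> space lebesgue \<in> sets lebesgue" by simp

lemma ext_meas:
  fixes \<phi> :: "real \<Rightarrow> real"
  assumes "\<phi> \<in> borel_measurable II"
  shows "(\<lambda>y. ennreal \<bar>\<phi> y\<bar> * indicator {0..1} y) \<in> borel_measurable lebesgue"
proof -
  have "(\<lambda>y. ennreal \<bar>\<phi> y\<bar>) \<in> borel_measurable II" using assms by measurable
  then show ?thesis using borel_measurable_restrict_space_iff_ennreal[OF sets_II_leb, of "\<lambda>y. ennreal \<bar>\<phi> y\<bar>"] by simp
qed

lemma nn_II: "(\<integral>\<^sup>+x. h x \<partial>II) = (\<integral>\<^sup>+x. h x * indicator {0..1} x \<partial>lebesgue)"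
  by (rule nn_integral_restrict_space) simp

lemma affine_push:
  fixes \<phi> :: "real \<Rightarrow> real"
  assumes "\<phi> \<in> borel_measurable II" "c \<noteq> 0"
  shows "(\<integral>\<^sup>+x. ennreal \<bar>\<phi> (t + c * x)\<bar> * indicator {0..1} (t + c * x) \<partial>lebesgue)
     = ennreal (1 / \<bar>c\<bar>) * (\<integral>\<^sup>+x. ennreal \<bar>\<phi> x\<bar> \<partial>II)"
proof -
  have "(\<integral>\<^sup>+x. ennreal \<bar>\<phi> x\<bar> \<partial>II) = (\<integral>\<^sup>+x. ennreal \<bar>\<phi> x\<bar> * indicator {0..1} x \<partial>lebesgue)"
    by (rule nn_II)
  also have "\<dots> = ennreal \<bar>c\<bar> * (\<integral>\<^sup>+x. ennreal \<bar>\<phi> (t + c * x)\<bar> * indicator {0..1} (t + c * x) \<partial>lebesgue)"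
    by (rule nn_integral_real_affine_lebesgue[OF ext_meas[OF assms(1)] assms(2)])
  finally have "ennreal (1 / \<bar>c\<bar>) * (\<integral>\<^sup>+x. ennreal \<bar>\<phi> x\<bar> \<partial>II) =
      ennreal (1 / \<bar>c\<bar>) * ennreal \<bar>c\<bar> * (\<integral>\<^sup>+x. ennreal \<bar>\<phi> (t + c * x)\<bar> * indicator {0..1} (t + c * x) \<partial>lebesgue)"
    by (simp add: mult.assoc)
  also have "ennreal (1 / \<bar>c\<bar>) * ennreal \<bar>c\<bar> = 1"
    using assms(2) by (simp add: ennreal_mult[symmetric])
  finally show ?thesis by simp
qed

definition refl01 :: "real \<Rightarrow> real" where "refl01 x = 1 - x"

lemma refl_meas: "refl01 \<in> II \<rightarrow>\<^sub>M II"
proof -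
  have "(\<lambda>x::real. 1 + (-1) * x) \<in> lebesgue \<rightarrow>\<^sub>M lebesgue" by (rule affine_meas) simp
  then have "refl01 \<in> lebesgue \<rightarrow>\<^sub>M lebesgue" by (simp add: refl01_def[abs_def])
  then show ?thesis by (rule measurable_restrict_space3) (auto simp: refl01_def)
qed

lemma refl_push:
  fixes \<phi> :: "real \<Rightarrow> real"
  assumes "\<phi> \<in> borel_measurable II"
  shows "(\<integral>\<^sup>+x. ennreal \<bar>\<phi> (refl01 x)\<bar> \<partial>II) \<le> ennreal 1 * (\<integral>\<^sup>+x. ennreal \<bar>\<phi> x\<bar> \<partial>II)"
proof -
  have "(\<integral>\<^sup>+x. ennreal \<bar>\<phi> (refl01 x)\<bar> \<partial>II) = (\<integral>\<^sup>+x. ennreal \<bar>\<phi> (refl01 x)\<bar> * indicator {0..1} x \<partial>lebesgue)"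
    by (rule nn_II)
  also have "\<dots> = (\<integral>\<^sup>+x. ennreal \<bar>\<phi> (1 + (-1) * x)\<bar> * indicator {0..1} (1 + (-1) * x) \<partial>lebesgue)"
    by (intro nn_integral_cong) (auto simp: refl01_def indicator_def)
  also have "\<dots> = ennreal (1 / \<bar>-1\<bar>) * (\<integral>\<^sup>+x. ennreal \<bar>\<phi> x\<bar> \<partial>II)"
    by (rule affine_push[OF assms]) simp
  finally show ?thesis by simp
qed

definition shq :: "nat \<Rightarrow> real \<Rightarrow> real" where
  "shq q x = (if x \<in> {..<1 - 1 / real q} then 1 / real q + 1 * x else (1 / real q - 1) + 1 * x)"

lemma shq_meas: "shq q \<in> II \<rightarrow>\<^sub>M II" if "q \<ge> 1"
proof -
  have "shq q \<in> lebesgue \<rightarrow>\<^sub>M lebesgue"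
    unfolding shq_def[abs_def]
    by (intro measurable_If_set affine_meas) auto
  moreover have "shq q \<in> {0..1} \<rightarrow> {0..1}"
  proof
    fix x :: real assume x: "x \<in> {0..1}"
    have q1: "1 / real q \<le> 1" and q0: "0 < 1 / real q" using that by auto
    show "shq q x \<in> {0..1}"
    proof (cases "x < 1 - 1 / real q")
      case True then show ?thesis using x q1 q0 by (simp add: shq_def)
    next
      case False
      have "0 \<le> x" "x \<le> 1" using x by auto
      then have "1 / real q - 1 + x \<le> 1" "0 \<le> 1 / real q - 1 + x" using False q1 q0 by linarith+
      then show ?thesis using False by (simp add: shq_def)
    qed
  qed
  ultimately show ?thesis by (rule measurable_restrict_space3)
qed

lemma shq_push:
  fixes \<phi> :: "real \<Rightarrow> real"
  assumes "\<phi> \<in> borel_measurable II" "q \<ge> 1"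
  shows "(\<integral>\<^sup>+x. ennreal \<bar>\<phi> (shq q x)\<bar> \<partial>II) \<le> ennreal 2 * (\<integral>\<^sup>+x. ennreal \<bar>\<phi> x\<bar> \<partial>II)"
proof -
  define \<psi> where "\<psi> y = ennreal \<bar>\<phi> y\<bar> * indicator {0..1} y" for y
  have \<psi>m[measurable]: "\<psi> \<in> borel_measurable lebesgue" unfolding \<psi>_def by (rule ext_meas[OF assms(1)])
  have in01: "shq q x \<in> {0..1}" if "x \<in> {0..1}" for x
    using measurable_space[OF shq_meas[OF assms(2)], of x] that by simp
  have "(\<integral>\<^sup>+x. ennreal \<bar>\<phi> (shq q x)\<bar> \<partial>II) = (\<integral>\<^sup>+x. ennreal \<bar>\<phi> (shq q x)\<bar> * indicator {0..1} x \<partial>lebesgue)"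
    by (rule nn_II)
  also have "\<dots> \<le> (\<integral>\<^sup>+x. \<psi> (1 / real q + 1 * x) + \<psi> ((1 / real q - 1) + 1 * x) \<partial>lebesgue)"
  proof (intro nn_integral_mono)
    fix x
    show "ennreal \<bar>\<phi> (shq q x)\<bar> * indicator {0..1} x \<le> \<psi> (1 / real q + 1 * x) + \<psi> ((1 / real q - 1) + 1 * x)"
    proof (cases "x \<in> {0..1}")
      case True
      then have "ennreal \<bar>\<phi> (shq q x)\<bar> * indicator {0..1} x = \<psi> (shq q x)"
        using in01[OF True] by (simp add: \<psi>_def)
      also have "\<dots> \<le> \<psi> (1 / real q + 1 * x) + \<psi> ((1 / real q - 1) + 1 * x)"
        by (cases "x \<in> {..<1 - 1 / real q}") (auto simp: shq_def)
      finally show ?thesis .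
    qed simp
  qed
  also have "\<dots> = (\<integral>\<^sup>+x. \<psi> (1 / real q + 1 * x) \<partial>lebesgue) + (\<integral>\<^sup>+x. \<psi> ((1 / real q - 1) + 1 * x) \<partial>lebesgue)"
  proof (intro nn_integral_add)
    have "(\<lambda>x. \<psi> (a + x)) \<in> borel_measurable lebesgue" for a
      using measurable_compose[OF affine_meas[of 1 a] \<psi>m] by simp
    then show "(\<lambda>x. \<psi> (1 / real q + 1 * x)) \<in> borel_measurable lebesgue"
      "(\<lambda>x. \<psi> ((1 / real q - 1) + 1 * x)) \<in> borel_measurable lebesgue" by auto
  qed
  also have "\<dots> = (\<integral>\<^sup>+x. \<psi> x \<partial>lebesgue) + (\<integral>\<^sup>+x. \<psi> x \<partial>lebesgue)"
    using nn_integral_real_affine_lebesgue[OF \<psi>m, of 1] by simp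
  also have "\<dots> = ennreal 2 * (\<integral>\<^sup>+x. ennreal \<bar>\<phi> x\<bar> \<partial>II)"
    unfolding \<psi>_def nn_II[symmetric] by (simp add: mult_2)
  finally show ?thesis .
qed

lemma shq_frac:
  assumes "q \<ge> 1" "x \<in> {0..1}" "x \<noteq> 1"
  shows "frac (x + 1 / real q) = shq q x"
proof -
  have q1: "1 / real q \<le> 1" and q0: "0 < 1 / real q" using assms by auto
  show ?thesis
  proof (cases "x < 1 - 1 / real q")
    case True
    have "0 \<le> x + 1 / real q" "x + 1 / real q < 0 + 1" using True assms q0 by auto
    then have "floor (x + 1 / real q) = 0" by (intro floor_unique) auto
    then show ?thesis using True by (simp add: frac_def shq_def)
  next
    case False
    have "x < 1" using assms by auto
    then have "1 \<le> x + 1 / real q" "x + 1 / real q < 1 + 1" using False q1 by linarith+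
    then have "floor (x + 1 / real q) = 1" by (intro floor_unique) auto
    then show ?thesis using False by (simp add: frac_def shq_def)
  qed
qed

lemma AE_II_ne1: "AE x in II. x \<noteq> 1"
proof -
  have "AE x in lebesgue. x \<noteq> (1::real)"
    using AE_lborel_singleton[of "1::real"] by (simp add: AE_completion)
  then show ?thesis by (subst AE_restrict_space_iff) (auto elim: AE_mp)
qed



lemma sfII: "sigma_finite_measure II"
proof -
  interpret finite_measure II by (rule finite_II)
  show ?thesis by unfold_locales
qed

lemma psII: "pair_sigma_finite II II"
  unfolding pair_sigma_finite_def using sfII by simp

lemma inv_from_defect:
  fixes f g :: "real \<Rightarrow> real \<Rightarrow> real" and u :: "real \<Rightarrow> real \<Rightarrow> real" and M :: "'m measure"
    and pa pb :: "'m \<Rightarrow> real"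
  assumes lf: "Lf-lipschitz_on UNIV (\<lambda>(a, b). f a b)"
    and lg: "Lg-lipschitz_on UNIV (\<lambda>(a, b). g a b)"
    and tr: "trajectory f g u"
    and pa: "pa \<in> M \<rightarrow>\<^sub>M II" and pb: "pb \<in> M \<rightarrow>\<^sub>M II" and c: "c \<ge> 0"
    and push1: "\<And>\<phi>. \<phi> \<in> borel_measurable II \<Longrightarrow>
        (\<integral>\<^sup>+\<omega>. ennreal \<bar>\<phi> (pa \<omega>)\<bar> \<partial>M) \<le> ennreal c * (\<integral>\<^sup>+x. ennreal \<bar>\<phi> x\<bar> \<partial>II)"
    and push2: "\<And>\<phi>. \<phi> \<in> borel_measurable II \<Longrightarrow>
        (\<integral>\<^sup>+\<omega>. ennreal \<bar>\<phi> (pb \<omega>)\<bar> \<partial>M) \<le> ennreal c * (\<integral>\<^sup>+x. ennreal \<bar>\<phi> x\<bar> \<partial>II)"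
    and ae0: "AE \<omega> in M. u 0 (pa \<omega>) = u 0 (pb \<omega>)"
  shows "AE \<omega> in M. u t (pa \<omega>) = u t (pb \<omega>)"
proof -
  have um: "u s \<in> borel_measurable II" for s using traj_int[OF tr] by (rule borel_measurable_integrable)
  have dm: "(\<lambda>\<omega>. ennreal \<bar>u s (pa \<omega>) - u s (pb \<omega>)\<bar>) \<in> borel_measurable M" for s
  proof -
    have "(\<lambda>\<omega>. u s (pa \<omega>) - u s (pb \<omega>)) \<in> borel_measurable M"
      using measurable_compose[OF pa um] measurable_compose[OF pb um] by (rule borel_measurable_diff)
    then show ?thesis by (rule measurable_compose) simp
  qed
  have z: "(\<integral>\<^sup>+\<omega>. ennreal \<bar>u 0 (pa \<omega>) - u 0 (pb \<omega>)\<bar> \<partial>M) = 0"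
    using ae0 by (subst nn_integral_0_iff_AE[OF dm]) (auto elim: AE_mp)
  have "(\<integral>\<^sup>+\<omega>. ennreal \<bar>u t (pa \<omega>) - u t (pb \<omega>)\<bar> \<partial>M) \<le> 0"
    using defect[OF lf lg tr pa pb c push1 push2, of t 0] unfolding z mult_zero_right .
  then have "(\<integral>\<^sup>+\<omega>. ennreal \<bar>u t (pa \<omega>) - u t (pb \<omega>)\<bar> \<partial>M) = 0" by simp
  then show ?thesis by (subst (asm) nn_integral_0_iff_AE[OF dm]) auto
qed

lemma id_push: "(\<integral>\<^sup>+x. ennreal \<bar>\<phi> x\<bar> \<partial>II) \<le> ennreal 1 * (\<integral>\<^sup>+x. ennreal \<bar>\<phi> x\<bar> \<partial>II)"
  by simp

lemma symm_inv:
  fixes f g :: "real \<Rightarrow> real \<Rightarrow> real"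
  assumes lf: "Lf-lipschitz_on UNIV (\<lambda>(a, b). f a b)"
    and lg: "Lg-lipschitz_on UNIV (\<lambda>(a, b). g a b)"
  shows "dyn_invariant f g symm_set"
  unfolding dyn_invariant_def
proof (intro allI impI)
  fix u t assume a: "trajectory f g u \<and> u 0 \<in> symm_set"
  then have tr: "trajectory f g u" by simp
  have "AE x in II. u 0 x = u 0 (refl01 x)" using a by (simp add: symm_set_def refl01_def)
  note ae0 = this
  have "AE x in II. u t x = u t (refl01 x)"
  proof (rule inv_from_defect[OF lf lg tr, where c=1 and pa="\<lambda>x. x" and pb=refl01 and M=II])
    show "(\<lambda>x. x) \<in> II \<rightarrow>\<^sub>M II" by simp
    show "refl01 \<in> II \<rightarrow>\<^sub>M II" by (rule refl_meas)
    show "(\<integral>\<^sup>+\<omega>. ennreal \<bar>\<phi> \<omega>\<bar> \<partial>II) \<le> ennreal 1 * (\<integral>\<^sup>+x. ennreal \<bar>\<phi> x\<bar> \<partial>II)" for \<phi> by simp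
    show "(\<integral>\<^sup>+\<omega>. ennreal \<bar>\<phi> (refl01 \<omega>)\<bar> \<partial>II) \<le> ennreal 1 * (\<integral>\<^sup>+x. ennreal \<bar>\<phi> x\<bar> \<partial>II)"
      if "\<phi> \<in> borel_measurable II" for \<phi> by (rule refl_push[OF that])
  qed (use ae0 in simp_all)
  moreover have "u t \<in> L1I" using traj_int[OF tr] by (simp add: L1I_def)
  ultimately show "u t \<in> symm_set" by (simp add: symm_set_def refl01_def)
qed

lemma periodic_inv:
  fixes f g :: "real \<Rightarrow> real \<Rightarrow> real"
  assumes lf: "Lf-lipschitz_on UNIV (\<lambda>(a, b). f a b)"
    and lg: "Lg-lipschitz_on UNIV (\<lambda>(a, b). g a b)" and q: "q \<ge> 1"
  shows "dyn_invariant f g (periodic_set q)"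
  unfolding dyn_invariant_def
proof (intro allI impI)
  fix u t assume a: "trajectory f g u \<and> u 0 \<in> periodic_set q"
  then have tr: "trajectory f g u" by simp
  have fr: "AE x in II. frac (x + 1 / real q) = shq q x"
    using AE_II_ne1 by (rule AE_mp) (auto intro!: AE_I2 shq_frac[OF q])
  have "AE x in II. u 0 (frac (x + 1 / real q)) = u 0 x" using a by (simp add: periodic_set_def)
  then have "AE x in II. u 0 (shq q x) = u 0 x" using fr by eventually_elim simp
  note ae0 = this
  have "AE x in II. u t (shq q x) = u t x"
  proof (rule inv_from_defect[OF lf lg tr, where c=2 and pb="\<lambda>x. x" and pa="shq q" and M=II])
    show "(\<lambda>x. x) \<in> II \<rightarrow>\<^sub>M II" by simp
    show "shq q \<in> II \<rightarrow>\<^sub>M II" by (rule shq_meas[OF q])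
    show "(\<integral>\<^sup>+\<omega>. ennreal \<bar>\<phi> \<omega>\<bar> \<partial>II) \<le> ennreal 2 * (\<integral>\<^sup>+x. ennreal \<bar>\<phi> x\<bar> \<partial>II)" for \<phi>
    proof -
      have "(\<integral>\<^sup>+\<omega>. ennreal \<bar>\<phi> \<omega>\<bar> \<partial>II) = 1 * (\<integral>\<^sup>+x. ennreal \<bar>\<phi> x\<bar> \<partial>II)" by simp
      also have "\<dots> \<le> ennreal 2 * (\<integral>\<^sup>+x. ennreal \<bar>\<phi> x\<bar> \<partial>II)"
        by (intro mult_right_mono) auto
      finally show ?thesis .
    qed
    show "(\<integral>\<^sup>+\<omega>. ennreal \<bar>\<phi> (shq q \<omega>)\<bar> \<partial>II) \<le> ennreal 2 * (\<integral>\<^sup>+x. ennreal \<bar>\<phi> x\<bar> \<partial>II)"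
      if "\<phi> \<in> borel_measurable II" for \<phi> by (rule shq_push[OF that q])
  qed (use ae0 in simp_all)
  then have "AE x in II. u t (frac (x + 1 / real q)) = u t x" using fr by eventually_elim simp
  moreover have "u t \<in> L1I" using traj_int[OF tr] by (simp add: L1I_def)
  ultimately show "u t \<in> periodic_set q" by (simp add: periodic_set_def)
qed



definition PM :: "(real \<times> real) set \<Rightarrow> (real \<times> real) measure" where
  "PM E = density (II \<Otimes>\<^sub>M II) (indicator E)"

lemma PM_fst: "fst \<in> PM E \<rightarrow>\<^sub>M II" unfolding PM_def by simp
lemma PM_snd: "snd \<in> PM E \<rightarrow>\<^sub>M II" unfolding PM_def by simp

lemma PM_push:
  fixes \<phi> :: "real \<Rightarrow> real"
  assumes E: "E \<in> sets (II \<Otimes>\<^sub>M II)" and \<phi>: "\<phi> \<in> borel_measurable II"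
  shows "(\<integral>\<^sup>+\<omega>. ennreal \<bar>\<phi> (fst \<omega>)\<bar> \<partial>PM E) \<le> ennreal 1 * (\<integral>\<^sup>+x. ennreal \<bar>\<phi> x\<bar> \<partial>II)"
    and "(\<integral>\<^sup>+\<omega>. ennreal \<bar>\<phi> (snd \<omega>)\<bar> \<partial>PM E) \<le> ennreal 1 * (\<integral>\<^sup>+x. ennreal \<bar>\<phi> x\<bar> \<partial>II)"
proof -
  interpret sigma_finite_measure II by (rule sfII)
  have am: "(\<lambda>x. ennreal \<bar>\<phi> x\<bar>) \<in> borel_measurable II"
    using \<phi> by (rule measurable_compose) simp
  have m1: "(\<lambda>\<omega>. ennreal \<bar>\<phi> (fst \<omega>)\<bar>) \<in> borel_measurable (II \<Otimes>\<^sub>M II)"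
    using measurable_compose[OF measurable_fst am] by simp
  have m2: "(\<lambda>\<omega>. ennreal \<bar>\<phi> (snd \<omega>)\<bar>) \<in> borel_measurable (II \<Otimes>\<^sub>M II)"
    using measurable_compose[OF measurable_snd am] by simp
  have im: "indicator E \<in> borel_measurable (II \<Otimes>\<^sub>M II)" using E by simp
  have sp: "emeasure II (space II) = 1" using emeasure_II by simp
  have "(\<integral>\<^sup>+\<omega>. ennreal \<bar>\<phi> (fst \<omega>)\<bar> \<partial>PM E) = (\<integral>\<^sup>+\<omega>. indicator E \<omega> * ennreal \<bar>\<phi> (fst \<omega>)\<bar> \<partial>(II \<Otimes>\<^sub>M II))"
    unfolding PM_def by (rule nn_integral_density[OF im m1])
  also have "\<dots> \<le> (\<integral>\<^sup>+\<omega>. ennreal \<bar>\<phi> (fst \<omega>)\<bar> \<partial>(II \<Otimes>\<^sub>M II))"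
    by (intro nn_integral_mono) (simp add: indicator_def)
  also have "\<dots> = (\<integral>\<^sup>+x. \<integral>\<^sup>+y. ennreal \<bar>\<phi> x\<bar> \<partial>II \<partial>II)"
    using nn_integral_fst[OF m1, symmetric] by simp
  also have "\<dots> = (\<integral>\<^sup>+x. ennreal \<bar>\<phi> x\<bar> \<partial>II)" by (simp add: emeasure_II)
  finally show "(\<integral>\<^sup>+\<omega>. ennreal \<bar>\<phi> (fst \<omega>)\<bar> \<partial>PM E) \<le> ennreal 1 * (\<integral>\<^sup>+x. ennreal \<bar>\<phi> x\<bar> \<partial>II)" by simp
  have "(\<integral>\<^sup>+\<omega>. ennreal \<bar>\<phi> (snd \<omega>)\<bar> \<partial>PM E) = (\<integral>\<^sup>+\<omega>. indicator E \<omega> * ennreal \<bar>\<phi> (snd \<omega>)\<bar> \<partial>(II \<Otimes>\<^sub>M II))"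
    unfolding PM_def by (rule nn_integral_density[OF im m2])
  also have "\<dots> \<le> (\<integral>\<^sup>+\<omega>. ennreal \<bar>\<phi> (snd \<omega>)\<bar> \<partial>(II \<Otimes>\<^sub>M II))"
    by (intro nn_integral_mono) (simp add: indicator_def)
  also have "\<dots> = (\<integral>\<^sup>+x. \<integral>\<^sup>+y. ennreal \<bar>\<phi> y\<bar> \<partial>II \<partial>II)"
    using nn_integral_fst[OF m2, symmetric] by simp
  also have "\<dots> = (\<integral>\<^sup>+x. ennreal \<bar>\<phi> x\<bar> \<partial>II)" by (simp add: emeasure_II)
  finally show "(\<integral>\<^sup>+\<omega>. ennreal \<bar>\<phi> (snd \<omega>)\<bar> \<partial>PM E) \<le> ennreal 1 * (\<integral>\<^sup>+x. ennreal \<bar>\<phi> x\<bar> \<partial>II)" by simp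
qed

lemma prod_ae:
  assumes P: "AE x in II. P x" and Q: "AE x in II. Q x"
  shows "AE \<omega> in II \<Otimes>\<^sub>M II. P (fst \<omega>) \<and> Q (snd \<omega>)"
proof -
  interpret pair_sigma_finite II II by (rule psII)
  obtain N1 where N1: "{x \<in> space II. \<not> P x} \<subseteq> N1" "emeasure II N1 = 0" "N1 \<in> sets II"
    using P by (auto elim: AE_E)
  obtain N2 where N2: "{x \<in> space II. \<not> Q x} \<subseteq> N2" "emeasure II N2 = 0" "N2 \<in> sets II"
    using Q by (auto elim: AE_E)
  define N where "N = N1 \<times> space II \<union> space II \<times> N2"
  have "N1 \<times> space II \<in> null_sets (II \<Otimes>\<^sub>M II)"
    using N1 by (intro sigma_finite_measure.times_in_null_sets1[OF sfII]) (auto simp: null_sets_def simp del: space_II)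
  moreover have "space II \<times> N2 \<in> null_sets (II \<Otimes>\<^sub>M II)"
    using N2 by (intro sigma_finite_measure.times_in_null_sets2[OF sfII]) (auto simp: null_sets_def simp del: space_II)
  ultimately have "N \<in> null_sets (II \<Otimes>\<^sub>M II)" unfolding N_def by (rule null_sets.Un)
  moreover have "{\<omega> \<in> space (II \<Otimes>\<^sub>M II). \<not> (P (fst \<omega>) \<and> Q (snd \<omega>))} \<subseteq> N"
    using N1(1) N2(1) unfolding N_def space_pair_measure by auto
  ultimately show ?thesis by (rule AE_I')
qed

lemma cluster_inv:
  fixes f g :: "real \<Rightarrow> real \<Rightarrow> real"
  assumes lf: "Lf-lipschitz_on UNIV (\<lambda>(a, b). f a b)"
    and lg: "Lg-lipschitz_on UNIV (\<lambda>(a, b). g a b)" and A: "A \<in> sets II"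
  shows "dyn_invariant f g (cluster A)"
  unfolding dyn_invariant_def
proof (intro allI impI)
  interpret pair_sigma_finite II II by (rule psII)
  fix u t assume a: "trajectory f g u \<and> u 0 \<in> cluster A"
  then have tr: "trajectory f g u" by simp
  obtain c where c: "AE x in II. x \<in> A \<longrightarrow> u 0 x = c" using a by (auto simp: cluster_def)
  define E where "E = A \<times> A"
  have E: "E \<in> sets (II \<Otimes>\<^sub>M II)" unfolding E_def by (rule pair_measureI[OF A A])
  have im: "indicator E \<in> borel_measurable (II \<Otimes>\<^sub>M II)" using E by simp
  have "AE \<omega> in II \<Otimes>\<^sub>M II. (fst \<omega> \<in> A \<longrightarrow> u 0 (fst \<omega>) = c) \<and> (snd \<omega> \<in> A \<longrightarrow> u 0 (snd \<omega>) = c)"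
    by (rule prod_ae[OF c c])
  then have ae0: "AE \<omega> in PM E. u 0 (fst \<omega>) = u 0 (snd \<omega>)"
    unfolding PM_def AE_density[OF im] by (rule AE_mp) (auto intro!: AE_I2 simp: E_def indicator_def)
  have "AE \<omega> in PM E. u t (fst \<omega>) = u t (snd \<omega>)"
  proof (rule inv_from_defect[OF lf lg tr, where c=1 and pa=fst and pb=snd and M="PM E"])
    show "fst \<in> PM E \<rightarrow>\<^sub>M II" by (rule PM_fst)
    show "snd \<in> PM E \<rightarrow>\<^sub>M II" by (rule PM_snd)
  qed (use ae0 PM_push[OF E] A in auto)
  then have "AE \<omega> in II \<Otimes>\<^sub>M II. \<omega> \<in> E \<longrightarrow> u t (fst \<omega>) = u t (snd \<omega>)"
    unfolding PM_def AE_density[OF im] by (rule AE_mp) (auto intro!: AE_I2 simp: indicator_def)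
  then have ae: "AE x in II. AE y in II. (x, y) \<in> E \<longrightarrow> u t x = u t y"
    by (rule AE_pair[where Q="\<lambda>\<omega>. \<omega> \<in> E \<longrightarrow> u t (fst \<omega>) = u t (snd \<omega>)", simplified])
  have "\<exists>c. AE x in II. x \<in> A \<longrightarrow> u t x = c"
  proof (cases "\<exists>x0\<in>A. AE y in II. (x0, y) \<in> E \<longrightarrow> u t x0 = u t y")
    case True
    then obtain x0 where x0: "AE y in II. (x0, y) \<in> E \<longrightarrow> u t x0 = u t y" and x0A: "x0 \<in> A" by auto
    from x0 have "AE y in II. y \<in> A \<longrightarrow> u t y = u t x0"
      by eventually_elim (auto simp: E_def x0A)
    then show ?thesis by blast
  next
    case False
    from ae have "AE x in II. x \<in> A \<longrightarrow> u t x = 0"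
      by eventually_elim (use False in auto)
    then show ?thesis by blast
  qed
  moreover have "u t \<in> L1I" using traj_int[OF tr] by (simp add: L1I_def)
  ultimately show "u t \<in> cluster A" by (simp add: cluster_def)
qed



lemma ess_support:
  fixes v :: "real \<Rightarrow> real"
  assumes vm: "v \<in> borel_measurable II"
  shows "AE x in II. \<forall>\<epsilon>>0. emeasure II {y \<in> space II. \<bar>v y - v x\<bar> < \<epsilon>} \<noteq> 0"
proof -
  define S where "S r s = {y \<in> space II. real_of_rat r < v y \<and> v y < real_of_rat s}" for r s
  have Ss: "S r s \<in> sets II" for r s
  proof -
    have "S r s = v -` {real_of_rat r<..<real_of_rat s} \<inter> space II" by (auto simp: S_def)
    also have "\<dots> \<in> sets II" using vm by (rule measurable_sets) simp
    finally show ?thesis .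
  qed
  have "AE x in II. \<forall>i. (real_of_rat (fst i) < v x \<and> v x < real_of_rat (snd i)) \<longrightarrow> emeasure II (S (fst i) (snd i)) \<noteq> 0"
    unfolding AE_all_countable
  proof
    fix i :: "rat \<times> rat"
    show "AE x in II. (real_of_rat (fst i) < v x \<and> v x < real_of_rat (snd i)) \<longrightarrow> emeasure II (S (fst i) (snd i)) \<noteq> 0"
    proof (cases "emeasure II (S (fst i) (snd i)) = 0")
      case True
      then have "S (fst i) (snd i) \<in> null_sets II" using Ss by (simp add: null_sets_def)
      from AE_not_in[OF this] AE_space show ?thesis
        by eventually_elim (auto simp: S_def simp del: space_II)
    next
      case False then show ?thesis by simp
    qed
  qed
  then show ?thesis
  proof eventually_elim
    case (elim x)
    show ?case
    proof (intro allI impI)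
      fix \<epsilon> :: real assume e: "\<epsilon> > 0"
      obtain a where a: "a \<in> \<rat>" "v x - \<epsilon> < a" "a < v x" using Rats_dense_in_real[of "v x - \<epsilon>" "v x"] e by auto
      obtain b where b: "b \<in> \<rat>" "v x < b" "b < v x + \<epsilon>" using Rats_dense_in_real[of "v x" "v x + \<epsilon>"] e by auto
      obtain r where r: "a = real_of_rat r" using a(1) Rats_cases by blast
      obtain s where s: "b = real_of_rat s" using b(1) Rats_cases by blast
      have ne: "emeasure II (S r s) \<noteq> 0" using elim[rule_format, of "(r, s)"] a b r s by simp
      have sub: "S r s \<subseteq> {y \<in> space II. \<bar>v y - v x\<bar> < \<epsilon>}" using a b r s by (auto simp: S_def)
      have ms: "{y \<in> space II. \<bar>v y - v x\<bar> < \<epsilon>} \<in> sets II"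
      proof -
        have m: "(\<lambda>y. \<bar>v y - v x\<bar>) \<in> borel_measurable II"
          using borel_measurable_diff[OF vm borel_measurable_const] by (rule measurable_compose) simp
        have "{y \<in> space II. \<bar>v y - v x\<bar> < \<epsilon>} = (\<lambda>y. \<bar>v y - v x\<bar>) -` {..<\<epsilon>} \<inter> space II" by auto
        also have "\<dots> \<in> sets II" using m by (rule measurable_sets) simp
        finally show ?thesis .
      qed
      have "emeasure II (S r s) \<le> emeasure II {y \<in> space II. \<bar>v y - v x\<bar> < \<epsilon>}"
        by (rule emeasure_mono[OF sub ms])
      then show "emeasure II {y \<in> space II. \<bar>v y - v x\<bar> < \<epsilon>} \<noteq> 0" using ne by auto
    qed
  qed
qed



lemma pair_bound:
  fixes f g :: "real \<Rightarrow> real \<Rightarrow> real" and u :: "real \<Rightarrow> real \<Rightarrow> real"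
  assumes lf: "Lf-lipschitz_on UNIV (\<lambda>(a, b). f a b)"
    and lg: "Lg-lipschitz_on UNIV (\<lambda>(a, b). g a b)"
    and tr: "trajectory f g u"
  shows "AE \<omega> in II \<Otimes>\<^sub>M II. \<bar>u s (fst \<omega>) - u s (snd \<omega>)\<bar>
     \<le> exp ((Lf * (1 + Lg) + 1) * \<bar>s - t\<bar>) * \<bar>u t (fst \<omega>) - u t (snd \<omega>)\<bar>"
proof (rule ccontr)
  assume na: "\<not> ?thesis"
  define k where "k = exp ((Lf * (1 + Lg) + 1) * \<bar>s - t\<bar>)"
  have k0: "k > 0" by (simp add: k_def)
  define F where "F r \<omega> = \<bar>u r (fst \<omega>) - u r (snd \<omega>)\<bar>" for r \<omega>
  have um: "u r \<in> borel_measurable II" for r using traj_int[OF tr] by (rule borel_measurable_integrable)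
  have Fm: "F r \<in> borel_measurable (II \<Otimes>\<^sub>M II)" for r
  proof -
    have "(\<lambda>\<omega>. u r (fst \<omega>) - u r (snd \<omega>)) \<in> borel_measurable (II \<Otimes>\<^sub>M II)"
      using measurable_compose[OF measurable_fst um] measurable_compose[OF measurable_snd um]
      by (rule borel_measurable_diff)
    then show ?thesis unfolding F_def[abs_def] by (rule measurable_compose) simp
  qed
  have kFm: "(\<lambda>\<omega>. k * F t \<omega>) \<in> borel_measurable (II \<Otimes>\<^sub>M II)"
    using borel_measurable_const Fm by (rule borel_measurable_times)
  define E where "E = {\<omega> \<in> space (II \<Otimes>\<^sub>M II). k * F t \<omega> < F s \<omega>}"
  have E: "E \<in> sets (II \<Otimes>\<^sub>M II)" unfolding E_def using kFm Fm by (rule borel_measurable_less)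
  have im: "indicator E \<in> borel_measurable (II \<Otimes>\<^sub>M II)" using E by simp
  have eFm: "(\<lambda>\<omega>. ennreal (F r \<omega>)) \<in> borel_measurable (II \<Otimes>\<^sub>M II)" for r using Fm[of r] by simp
  define D where "D r = (\<integral>\<^sup>+\<omega>. ennreal (F r \<omega>) \<partial>PM E)" for r
  have Dd: "D r = (\<integral>\<^sup>+\<omega>. indicator E \<omega> * ennreal (F r \<omega>) \<partial>(II \<Otimes>\<^sub>M II))" for r
    unfolding D_def PM_def by (rule nn_integral_density[OF im eFm])
  have "D s \<le> ennreal k * D t"
    unfolding D_def F_def k_def
    by (rule defect[OF lf lg tr PM_fst PM_snd, where c=1]) (use PM_push[OF E] in auto)
  have fin: "D t < \<infinity>"
  proof -
    have uf: "(\<integral>\<^sup>+x. ennreal \<bar>u t x\<bar> \<partial>II) < \<infinity>" using traj_int[OF tr, of t] by (simp add: integrable_iff_bounded)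
    have m1: "(\<lambda>\<omega>. ennreal \<bar>u t (fst \<omega>)\<bar>) \<in> borel_measurable (PM E)"
      using measurable_compose[OF PM_fst um] by (rule measurable_compose) simp
    have m2: "(\<lambda>\<omega>. ennreal \<bar>u t (snd \<omega>)\<bar>) \<in> borel_measurable (PM E)"
      using measurable_compose[OF PM_snd um] by (rule measurable_compose) simp
    have "D t \<le> (\<integral>\<^sup>+\<omega>. ennreal \<bar>u t (fst \<omega>)\<bar> + ennreal \<bar>u t (snd \<omega>)\<bar> \<partial>PM E)"
      unfolding D_def F_def by (intro nn_integral_mono) (simp add: ennreal_plus[symmetric] del: ennreal_plus)
    also have "\<dots> = (\<integral>\<^sup>+\<omega>. ennreal \<bar>u t (fst \<omega>)\<bar> \<partial>PM E) + (\<integral>\<^sup>+\<omega>. ennreal \<bar>u t (snd \<omega>)\<bar> \<partial>PM E)"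
      by (rule nn_integral_add[OF m1 m2])
    also have "\<dots> \<le> ennreal 1 * (\<integral>\<^sup>+x. ennreal \<bar>u t x\<bar> \<partial>II) + ennreal 1 * (\<integral>\<^sup>+x. ennreal \<bar>u t x\<bar> \<partial>II)"
      using PM_push[OF E um[of t]] by (intro add_mono) auto
    also have "\<dots> < \<infinity>" using uf by simp
    finally show ?thesis .
  qed
  define fA where "fA \<omega> = indicator E \<omega> * ennreal (k * F t \<omega>)" for \<omega>
  define gA where "gA \<omega> = indicator E \<omega> * ennreal (F s \<omega>)" for \<omega>
  have fAm: "fA \<in> borel_measurable (II \<Otimes>\<^sub>M II)" unfolding fA_def using im kFm by measurable
  have gAm: "gA \<in> borel_measurable (II \<Otimes>\<^sub>M II)" unfolding gA_def using im eFm by measurable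
  have ifA: "(\<integral>\<^sup>+\<omega>. fA \<omega> \<partial>(II \<Otimes>\<^sub>M II)) = ennreal k * D t"
  proof -
    have "(\<integral>\<^sup>+\<omega>. fA \<omega> \<partial>(II \<Otimes>\<^sub>M II)) = (\<integral>\<^sup>+\<omega>. ennreal k * (indicator E \<omega> * ennreal (F t \<omega>)) \<partial>(II \<Otimes>\<^sub>M II))"
      unfolding fA_def using k0 by (intro nn_integral_cong) (simp add: ennreal_mult mult.left_commute F_def)
    also have "\<dots> = ennreal k * D t"
    proof -
      have "(\<lambda>\<omega>. indicator E \<omega> * ennreal (F t \<omega>)) \<in> borel_measurable (II \<Otimes>\<^sub>M II)"
        using im eFm[of t] by measurable
      then show ?thesis unfolding Dd by (rule nn_integral_cmult)
    qed
    finally show ?thesis .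
  qed
  have igA: "(\<integral>\<^sup>+\<omega>. gA \<omega> \<partial>(II \<Otimes>\<^sub>M II)) = D s" unfolding Dd gA_def ..
  have le: "AE \<omega> in II \<Otimes>\<^sub>M II. fA \<omega> \<le> gA \<omega>"
    by (rule AE_I2) (auto simp: fA_def gA_def E_def indicator_def intro!: ennreal_leI)
  have nle: "\<not> (AE \<omega> in II \<Otimes>\<^sub>M II. gA \<omega> \<le> fA \<omega>)"
  proof
    assume "AE \<omega> in II \<Otimes>\<^sub>M II. gA \<omega> \<le> fA \<omega>"
    then have "AE \<omega> in II \<Otimes>\<^sub>M II. \<bar>u s (fst \<omega>) - u s (snd \<omega>)\<bar> \<le> k * \<bar>u t (fst \<omega>) - u t (snd \<omega>)\<bar>"
    proof (rule AE_mp[OF _ AE_I2], intro impI)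
      fix \<omega> assume sp: "\<omega> \<in> space (II \<Otimes>\<^sub>M II)" and h: "gA \<omega> \<le> fA \<omega>"
      show "\<bar>u s (fst \<omega>) - u s (snd \<omega>)\<bar> \<le> k * \<bar>u t (fst \<omega>) - u t (snd \<omega>)\<bar>"
      proof (cases "\<omega> \<in> E")
        case True
        then have "ennreal (F s \<omega>) \<le> ennreal (k * F t \<omega>)" using h by (simp add: fA_def gA_def)
        then have "F s \<omega> \<le> k * F t \<omega>" using k0 by (simp add: F_def ennreal_le_iff)
        then show ?thesis by (simp add: F_def)
      next
        case False
        then show ?thesis using sp by (simp add: E_def F_def not_less)
      qed
    qed
    then show False using na by (simp add: k_def)
  qed
  have "(\<integral>\<^sup>+\<omega>. fA \<omega> \<partial>(II \<Otimes>\<^sub>M II)) < (\<integral>\<^sup>+\<omega>. gA \<omega> \<partial>(II \<Otimes>\<^sub>M II))"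
  proof (rule nn_integral_less[OF fAm gAm _ le nle])
    show "(\<integral>\<^sup>+\<omega>. fA \<omega> \<partial>(II \<Otimes>\<^sub>M II)) \<noteq> \<infinity>" unfolding ifA using fin
      by (simp add: ennreal_mult_eq_top_iff)
  qed
  then show False using \<open>D s \<le> ennreal k * D t\<close> unfolding ifA igA by simp
qed



lemma set_lt_sets:
  fixes v :: "real \<Rightarrow> real"
  assumes vm: "v \<in> borel_measurable II"
  shows "{y \<in> space II. \<bar>v y - c\<bar> < \<epsilon>} \<in> sets II"
proof -
  have m: "(\<lambda>y. \<bar>v y - c\<bar>) \<in> borel_measurable II"
    using borel_measurable_diff[OF vm borel_measurable_const] by (rule measurable_compose) simp
  have "{y \<in> space II. \<bar>v y - c\<bar> < \<epsilon>} = (\<lambda>y. \<bar>v y - c\<bar>) -` {..<\<epsilon>} \<inter> space II" by auto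
  also have "\<dots> \<in> sets II" using m by (rule measurable_sets) simp
  finally show ?thesis .
qed

lemma inj_inv:
  fixes f g :: "real \<Rightarrow> real \<Rightarrow> real"
  assumes lf: "Lf-lipschitz_on UNIV (\<lambda>(a, b). f a b)"
    and lg: "Lg-lipschitz_on UNIV (\<lambda>(a, b). g a b)"
  shows "dyn_invariant f g inj_ae_set"
  unfolding dyn_invariant_def
proof (intro allI impI)
  interpret pair_sigma_finite II II by (rule psII)
  fix u t assume a: "trajectory f g u \<and> u 0 \<in> inj_ae_set"
  then have tr: "trajectory f g u" by simp
  obtain N0 where N0: "N0 \<in> null_sets II" "inj_on (u 0) ({0..1} - N0)"
    using a by (auto simp: inj_ae_set_def)
  define k where "k = exp ((Lf * (1 + Lg) + 1) * \<bar>0 - t\<bar>)"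
  have k0: "k > 0" by (simp add: k_def)
  have um: "u r \<in> borel_measurable II" for r using traj_int[OF tr] by (rule borel_measurable_integrable)
  have pb: "AE \<omega> in II \<Otimes>\<^sub>M II. \<bar>u 0 (fst \<omega>) - u 0 (snd \<omega>)\<bar> \<le> k * \<bar>u t (fst \<omega>) - u t (snd \<omega>)\<bar>"
    unfolding k_def by (rule pair_bound[OF lf lg tr])
  have G: "AE x in II. AE y in II. \<bar>u 0 x - u 0 y\<bar> \<le> k * \<bar>u t x - u t y\<bar>"
    using AE_pair[OF pb] by simp
  have S: "AE x in II. \<forall>\<epsilon>>0. emeasure II {y \<in> space II. \<bar>u t y - u t x\<bar> < \<epsilon>} \<noteq> 0"
    by (rule ess_support[OF um])
  have "AE x in II. (AE y in II. \<bar>u 0 x - u 0 y\<bar> \<le> k * \<bar>u t x - u t y\<bar>) \<and>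
      (\<forall>\<epsilon>>0. emeasure II {y \<in> space II. \<bar>u t y - u t x\<bar> < \<epsilon>} \<noteq> 0)"
    using G S by eventually_elim simp
  then obtain N' where N': "{x \<in> space II. \<not> ((AE y in II. \<bar>u 0 x - u 0 y\<bar> \<le> k * \<bar>u t x - u t y\<bar>) \<and>
      (\<forall>\<epsilon>>0. emeasure II {y \<in> space II. \<bar>u t y - u t x\<bar> < \<epsilon>} \<noteq> 0))} \<subseteq> N'"
      "emeasure II N' = 0" "N' \<in> sets II"
    by (erule AE_E)
  define N where "N = N0 \<union> N'"
  have "N' \<in> null_sets II" using N'(2,3) by (simp add: null_sets_def)
  then have Nn: "N \<in> null_sets II" unfolding N_def using N0(1) by (rule null_sets.Un[rotated])
  have good: "(AE y in II. \<bar>u 0 x - u 0 y\<bar> \<le> k * \<bar>u t x - u t y\<bar>) \<and>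
      (\<forall>\<epsilon>>0. emeasure II {y \<in> space II. \<bar>u t y - u t x\<bar> < \<epsilon>} \<noteq> 0)" if "x \<in> {0..1} - N" for x
    using that N'(1) unfolding N_def by auto
  have "inj_on (u t) ({0..1} - N)"
  proof (rule inj_onI)
    fix x x' assume x: "x \<in> {0..1} - N" and x': "x' \<in> {0..1} - N" and eq: "u t x = u t x'"
    have Gx: "AE y in II. \<bar>u 0 x - u 0 y\<bar> \<le> k * \<bar>u t x - u t y\<bar>" using good[OF x] by blast
    have Gx': "AE y in II. \<bar>u 0 x' - u 0 y\<bar> \<le> k * \<bar>u t x' - u t y\<bar>" using good[OF x'] by blast
    have Sx': "emeasure II {y \<in> space II. \<bar>u t y - u t x'\<bar> < \<epsilon>} \<noteq> 0" if "\<epsilon> > 0" for \<epsilon>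
      using good[OF x'] that by blast
    have "u 0 x = u 0 x'"
    proof (rule ccontr)
      assume ne: "u 0 x \<noteq> u 0 x'"
      define d where "d = \<bar>u 0 x - u 0 x'\<bar>"
      have d0: "d > 0" using ne by (simp add: d_def)
      define \<epsilon> where "\<epsilon> = d / (2 * k)"
      have e0: "\<epsilon> > 0" using d0 k0 by (simp add: \<epsilon>_def)
      define Y where "Y = {y \<in> space II. \<bar>u t y - u t x'\<bar> < \<epsilon>}"
      have Ys: "Y \<in> sets II" unfolding Y_def by (rule set_lt_sets[OF um])
      have "\<exists>y\<in>Y. \<bar>u 0 x - u 0 y\<bar> \<le> k * \<bar>u t x - u t y\<bar> \<and> \<bar>u 0 x' - u 0 y\<bar> \<le> k * \<bar>u t x' - u t y\<bar>"
      proof (rule ccontr)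
        assume nex: "\<not> ?thesis"
        from Gx Gx' have "AE y in II. y \<notin> Y" by eventually_elim (use nex in auto)
        then have "Y \<in> null_sets II" using Ys by (simp add: AE_iff_null_sets)
        then show False using Sx'[OF e0] unfolding Y_def by auto
      qed
      then obtain y where y: "y \<in> Y" "\<bar>u 0 x - u 0 y\<bar> \<le> k * \<bar>u t x - u t y\<bar>"
        "\<bar>u 0 x' - u 0 y\<bar> \<le> k * \<bar>u t x' - u t y\<bar>" by blast
      have yl: "\<bar>u t x' - u t y\<bar> < \<epsilon>" using y(1) by (simp add: Y_def abs_minus_commute)
      have "k * \<bar>u t x' - u t y\<bar> < k * \<epsilon>" using yl k0 by simp
      moreover have "\<bar>u 0 x - u 0 x'\<bar> \<le> \<bar>u 0 x - u 0 y\<bar> + \<bar>u 0 x' - u 0 y\<bar>" by arith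
      moreover have "\<bar>u 0 x - u 0 y\<bar> \<le> k * \<bar>u t x' - u t y\<bar>" using y(2) eq by simp
      ultimately have "d < k * \<epsilon> + k * \<epsilon>" using y(3) unfolding d_def by linarith
      also have "\<dots> = d" using k0 by (simp add: \<epsilon>_def field_simps)
      finally show False by simp
    qed
    then show "x = x'" using N0(2) x x' unfolding N_def by (auto dest: inj_onD)
  qed
  moreover have "u t \<in> L1I" using traj_int[OF tr] by (simp add: L1I_def)
  ultimately show "u t \<in> inj_ae_set" using Nn by (auto simp: inj_ae_set_def)
qed


theorem proposition4p8:
  fixes f g :: "real \<Rightarrow> real \<Rightarrow> real"
  assumes "\<exists>L. L-lipschitz_on UNIV (\<lambda>(a, b). f a b)"
      and "\<exists>L. L-lipschitz_on UNIV (\<lambda>(a, b). g a b)"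
  shows "(\<forall>A. A \<in> sets II \<longrightarrow> dyn_invariant f g (cluster A))
       \<and> (\<forall>(n::nat) (A::nat \<Rightarrow> real set). (\<forall>k\<in>{1..n}. A k \<in> sets II)
            \<longrightarrow> dyn_invariant f g (\<Inter>k\<in>{1..n}. cluster (A k)))
       \<and> dyn_invariant f g inj_ae_set
       \<and> (\<forall>q::nat. q \<ge> 1 \<longrightarrow> dyn_invariant f g (periodic_set q))
       \<and> dyn_invariant f g symm_set"
proof -
  obtain Lf where lf: "Lf-lipschitz_on UNIV (\<lambda>(a, b). f a b)" using assms(1) by blast
  obtain Lg where lg: "Lg-lipschitz_on UNIV (\<lambda>(a, b). g a b)" using assms(2) by blast
  have c1: "\<forall>A. A \<in> sets II \<longrightarrow> dyn_invariant f g (cluster A)"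
    using cluster_inv[OF lf lg] by blast
  have c2: "\<forall>(n::nat) (A::nat \<Rightarrow> real set). (\<forall>k\<in>{1..n}. A k \<in> sets II)
            \<longrightarrow> dyn_invariant f g (\<Inter>k\<in>{1..n}. cluster (A k))"
  proof (intro allI impI)
    fix n :: nat and A :: "nat \<Rightarrow> real set"
    assume As: "\<forall>k\<in>{1..n}. A k \<in> sets II"
    show "dyn_invariant f g (\<Inter>k\<in>{1..n}. cluster (A k))"
      unfolding dyn_invariant_def
    proof (intro allI impI)
      fix u t assume a: "trajectory f g u \<and> u 0 \<in> (\<Inter>k\<in>{1..n}. cluster (A k))"
      show "u t \<in> (\<Inter>k\<in>{1..n}. cluster (A k))"
      proof
        fix k assume k: "k \<in> {1..n}"
        have "dyn_invariant f g (cluster (A k))" using c1 As k by blast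
        then show "u t \<in> cluster (A k)" using a k unfolding dyn_invariant_def by blast
      qed
    qed
  qed
  show ?thesis
    using c1 c2 inj_inv[OF lf lg] periodic_inv[OF lf lg] symm_inv[OF lf lg] by blast
qed

end
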